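(* Let $d\ge 2$, let $\mathcal{K}=\{k_1,\ldots,k_r\}\subset\{1,\ldots,d-1\}$ (with $k_1,\ldots,k_r$ distinct) and $t\in\mathbb{N}_0$ be such that $\min\{k_1,d-k_1\}\ge\min\{k_2,d-k_2\}\ge\cdots\ge\min\{k_r,d-k_r\}$. Then, with $s:=\min\{t+1,|\mathcal{K}|\}$, $$\dim\big(\mathrm{Pol}_t(\mathcal{G}_{\mathcal{K},d})\big)\ \ge\ \sum_{i=1}^{s}\dim\big(\mathrm{Pol}_{t-i+1}(\mathcal{G}_{k_i,d})\big).$$
   Context: $\mathbb{R}^{d\times d}_{\mathrm{sym}}$ denotes the real symmetric $d\times d$ matrices. For $1\le k\le d-1$, the Grassmannian is $\mathcal{G}_{k,d}=\{P\in\mathbb{R}^{d\times d}_{\mathrm{sym}}:P^2=P,\ \mathrm{Tr}(P)=k\}$, and for nonempty $\mathcal{K}\subset\{1,\ldots,d-1\}$, $\mathcal{G}_{\mathcal{K},d}=\bigcup_{k\in\mathcal{K}}\mathcal{G}_{k,d}$. $\mathrm{Pol}_t(\mathbb{R}^{d\times d}_{\mathrm{sym}})$ is the space of real polynomials of total degree at most $t$ in the matrix entries, and for a subset $M\subset\mathbb{R}^{d\times d}_{\mathrm{sym}}$ (such as $\mathcal{G}_{k,d}$ or $\mathcal{G}_{\mathcal{K},d}$), $\mathrm{Pol}_t(M)=\{f|_M: f\in\mathrm{Pol}_t(\mathbb{R}^{d\times d}_{\mathrm{sym}})\}$. *)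

theory Defs
  imports "HOL-Analysis.Analysis" "HOL-Library.Function_Algebras"
begin

definition symmat :: "(real^'n^'n) set" where
  "symmat = {A. transpose A = A}"

text \<open>Grassmannian G_{k,d}: symmetric idempotents of trace k.\<close>
definition grass :: "nat \<Rightarrow> (real^'n^'n) set" where
  "grass k = {P. transpose P = P \<and> P ** P = P \<and> trace P = real k}"

definition grassK :: "nat set \<Rightarrow> (real^'n^'n) set" where
  "grassK K = (\<Union>k\<in>K. grass k)"

definition monom_mat :: "('n \<times> 'n \<Rightarrow> nat) \<Rightarrow> real^'n^'n \<Rightarrow> real" where
  "monom_mat \<alpha> A = (\<Prod>ij\<in>UNIV. (A $ fst ij $ snd ij) ^ \<alpha> ij)"

definition mdeg :: "('n::finite \<times> 'n \<Rightarrow> nat) \<Rightarrow> nat" where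
  "mdeg \<alpha> = (\<Sum>ij\<in>UNIV. \<alpha> ij)"

definition PolSym :: "nat \<Rightarrow> (real^'n::finite^'n \<Rightarrow> real) set" where
  "PolSym t = {p. \<exists>F c. finite F \<and> (\<forall>\<alpha>\<in>F. mdeg \<alpha> \<le> t) \<and>
       p = (\<lambda>A. if A \<in> symmat then (\<Sum>\<alpha>\<in>F. c \<alpha> * monom_mat \<alpha> A) else 0)}"

text \<open>Pol_t(M) = restrictions to M (extended by 0 outside M) of polynomials of degree <= t.\<close>
definition PolOn :: "nat \<Rightarrow> (real^'n::finite^'n) set \<Rightarrow> (real^'n^'n \<Rightarrow> real) set" where
  "PolOn t M = {(\<lambda>A. if A \<in> M then p A else 0) | p. p \<in> PolSym t}"

definition fdim :: "('a \<Rightarrow> real) set \<Rightarrow> nat" where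
  "fdim S = vector_space.dim (\<lambda>c f x. c * f x) S"

end

theory Submission
  imports Defs
begin

lemma vsF: "vector_space (\<lambda>(c::real) (f::'a\<Rightarrow>real) x. c * f x)"
  by unfold_locales (auto simp: fun_eq_iff algebra_simps)

interpretation FV: vector_space "\<lambda>(c::real) (f::'a\<Rightarrow>real) x. c * f x"
  by (rule vsF)

lemma fdim_eq: "fdim S = FV.dim S"
  unfolding fdim_def by simp

lemma sum_fun_apply: "(sum g T) x = (\<Sum>v\<in>T. g v x)"
  by (induct T rule: infinite_finite_induct) auto

lemma card_le_fdim:
  assumes "V \<subseteq> FV.span W" "finite W" "B \<subseteq> V" "FV.independent B"
  shows "finite B \<and> card B \<le> fdim V"
proof -
  obtain C where C: "C \<subseteq> V" "FV.independent C" "V \<subseteq> FV.span C" "card C = FV.dim V"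
    using FV.basis_exists by blast
  have fC: "finite C" using FV.independent_span_bound[OF assms(2) C(2)] C(1) assms(1) by blast
  have "finite B \<and> card B \<le> card C"
    using FV.independent_span_bound[OF fC assms(4)] assms(3) C(3) by blast
  then show ?thesis using C(4) fdim_eq by metis
qed

lemma basis_fin:
  assumes "V \<subseteq> FV.span W" "finite W"
  shows "\<exists>B. finite B \<and> B \<subseteq> V \<and> FV.independent B \<and> card B = fdim V"
proof -
  obtain C where C: "C \<subseteq> V" "FV.independent C" "V \<subseteq> FV.span C" "card C = FV.dim V"
    using FV.basis_exists by blast
  have fC: "finite C" using FV.independent_span_bound[OF assms(2) C(2)] C(1) assms(1) by blast
  then show ?thesis using C fdim_eq by metis
qed

definition polyf :: "nat \<Rightarrow> (real^'n::finite^'n \<Rightarrow> real) \<Rightarrow> bool" where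
  "polyf t f \<longleftrightarrow> (\<exists>F c. finite F \<and> (\<forall>\<alpha>\<in>F. mdeg \<alpha> \<le> t) \<and> f = (\<lambda>A. \<Sum>\<alpha>\<in>F. c \<alpha> * monom_mat \<alpha> A))"

lemma polyf_gen:
  fixes a :: "'i \<Rightarrow> ('n::finite \<times> 'n \<Rightarrow> nat)"
  assumes "finite I" "\<forall>i\<in>I. mdeg (a i) \<le> t"
  shows "polyf t (\<lambda>A. \<Sum>i\<in>I. c i * monom_mat (a i) A)"
proof -
  have "(\<lambda>A. \<Sum>i\<in>I. c i * monom_mat (a i) A) =
        (\<lambda>A. \<Sum>\<gamma>\<in>a ` I. (\<Sum>i\<in>{i\<in>I. a i = \<gamma>}. c i) * monom_mat \<gamma> A)"
  proof
    fix A
    have "(\<Sum>i\<in>I. c i * monom_mat (a i) A) =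
          (\<Sum>\<gamma>\<in>a ` I. \<Sum>i\<in>{i\<in>I. a i = \<gamma>}. c i * monom_mat (a i) A)"
      by (rule sum.image_gen[OF assms(1)])
    also have "\<dots> = (\<Sum>\<gamma>\<in>a ` I. (\<Sum>i\<in>{i\<in>I. a i = \<gamma>}. c i) * monom_mat \<gamma> A)"
    proof (rule sum.cong[OF refl])
      fix \<gamma> assume "\<gamma> \<in> a ` I"
      have "(\<Sum>i\<in>{i\<in>I. a i = \<gamma>}. c i * monom_mat (a i) A) = (\<Sum>i\<in>{i\<in>I. a i = \<gamma>}. c i * monom_mat \<gamma> A)"
        by (rule sum.cong) auto
      then show "(\<Sum>i\<in>{i\<in>I. a i = \<gamma>}. c i * monom_mat (a i) A) = (\<Sum>i\<in>{i\<in>I. a i = \<gamma>}. c i) * monom_mat \<gamma> A"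
        by (simp add: sum_distrib_right)
    qed
    finally show "(\<Sum>i\<in>I. c i * monom_mat (a i) A) =
          (\<Sum>\<gamma>\<in>a ` I. (\<Sum>i\<in>{i\<in>I. a i = \<gamma>}. c i) * monom_mat \<gamma> A)" .
  qed
  moreover have "finite (a ` I)" "\<forall>\<alpha>\<in>a ` I. mdeg \<alpha> \<le> t" using assms by auto
  ultimately show ?thesis unfolding polyf_def by (intro exI[of _ "a ` I"] exI[of _ "\<lambda>\<gamma>. \<Sum>i\<in>{i\<in>I. a i = \<gamma>}. c i"]) simp
qed

lemma polyf_mono: "polyf s f \<Longrightarrow> s \<le> t \<Longrightarrow> polyf t f"
  unfolding polyf_def by (blast intro: order_trans)

lemma polyf_const: "polyf 0 (\<lambda>A. c)"
proof -
  have "polyf 0 (\<lambda>A. \<Sum>i\<in>{()}. c * monom_mat (\<lambda>_. 0) A)"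
    by (rule polyf_gen) (auto simp: mdeg_def)
  then show ?thesis by (simp add: monom_mat_def)
qed

lemma polyf_add:
  assumes "polyf t f" "polyf t g" shows "polyf t (\<lambda>A. f A + g A)"
proof -
  obtain F c where F: "finite F" "\<forall>\<alpha>\<in>F. mdeg \<alpha> \<le> t" "f = (\<lambda>A. \<Sum>\<alpha>\<in>F. c \<alpha> * monom_mat \<alpha> A)"
    using assms(1) unfolding polyf_def by blast
  obtain G d where G: "finite G" "\<forall>\<alpha>\<in>G. mdeg \<alpha> \<le> t" "g = (\<lambda>A. \<Sum>\<alpha>\<in>G. d \<alpha> * monom_mat \<alpha> A)"
    using assms(2) unfolding polyf_def by blast
  define a where "a = case_sum (\<lambda>x::'a \<times> 'a \<Rightarrow> nat. x) (\<lambda>x. x)"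
  define e where "e = case_sum c d"
  have "polyf t (\<lambda>A. \<Sum>i\<in>F <+> G. e i * monom_mat (a i) A)"
    by (rule polyf_gen) (use F G in \<open>auto simp: a_def\<close>)
  moreover have "(\<lambda>A. \<Sum>i\<in>F <+> G. e i * monom_mat (a i) A) = (\<lambda>A. f A + g A)"
    using F G by (simp add: sum.Plus a_def e_def o_def)
  ultimately show ?thesis by simp
qed

lemma polyf_scale:
  assumes "polyf t f" shows "polyf t (\<lambda>A. r * f A)"
proof -
  obtain F c where F: "finite F" "\<forall>\<alpha>\<in>F. mdeg \<alpha> \<le> t" "f = (\<lambda>A. \<Sum>\<alpha>\<in>F. c \<alpha> * monom_mat \<alpha> A)"
    using assms(1) unfolding polyf_def by blast
  have "polyf t (\<lambda>A. \<Sum>\<alpha>\<in>F. (r * c \<alpha>) * monom_mat \<alpha> A)"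
    by (rule polyf_gen) (use F in auto)
  then show ?thesis using F by (simp add: sum_distrib_left mult.assoc)
qed

lemma monom_mult: "monom_mat \<alpha> A * monom_mat \<beta> A = monom_mat (\<lambda>ij. \<alpha> ij + \<beta> ij) A"
  unfolding monom_mat_def by (simp add: prod.distrib[symmetric] power_add)

lemma mdeg_add: "mdeg (\<lambda>ij. \<alpha> ij + \<beta> ij) = mdeg \<alpha> + mdeg \<beta>"
  unfolding mdeg_def by (simp add: sum.distrib)

lemma polyf_mult:
  assumes "polyf s f" "polyf t g" shows "polyf (s + t) (\<lambda>A. f A * g A)"
proof -
  obtain F c where F: "finite F" "\<forall>\<alpha>\<in>F. mdeg \<alpha> \<le> s" "f = (\<lambda>A. \<Sum>\<alpha>\<in>F. c \<alpha> * monom_mat \<alpha> A)"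
    using assms(1) unfolding polyf_def by blast
  obtain G d where G: "finite G" "\<forall>\<alpha>\<in>G. mdeg \<alpha> \<le> t" "g = (\<lambda>A. \<Sum>\<alpha>\<in>G. d \<alpha> * monom_mat \<alpha> A)"
    using assms(2) unfolding polyf_def by blast
  have "polyf (s + t) (\<lambda>A. \<Sum>p\<in>F \<times> G. (c (fst p) * d (snd p)) * monom_mat (\<lambda>ij. fst p ij + snd p ij) A)"
    by (rule polyf_gen) (use F G in \<open>auto simp: mdeg_add intro: add_mono\<close>)
  moreover have "(\<lambda>A. \<Sum>p\<in>F \<times> G. (c (fst p) * d (snd p)) * monom_mat (\<lambda>ij. fst p ij + snd p ij) A)
     = (\<lambda>A. f A * g A)"
  proof
    fix A
    have "f A * g A = (\<Sum>\<alpha>\<in>F. \<Sum>\<beta>\<in>G. (c \<alpha> * monom_mat \<alpha> A) * (d \<beta> * monom_mat \<beta> A))"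
      using F G by (simp add: sum_product)
    also have "\<dots> = (\<Sum>p\<in>F \<times> G. (c (fst p) * d (snd p)) * monom_mat (\<lambda>ij. fst p ij + snd p ij) A)"
      by (simp add: sum.cartesian_product monom_mult[symmetric] mult_ac case_prod_beta)
    finally show "(\<Sum>p\<in>F \<times> G. (c (fst p) * d (snd p)) * monom_mat (\<lambda>ij. fst p ij + snd p ij) A) = f A * g A" by simp
  qed
  ultimately show ?thesis by simp
qed

lemma polyf_trace: "polyf 1 (\<lambda>A::real^'n::finite^'n. trace A)"
proof -
  define e where "e = (\<lambda>(i::'n) (ij::'n\<times>'n). if ij = (i,i) then 1 else (0::nat))"
  have m: "monom_mat (e i) A = A $ i $ i" for i and A :: "real^'n^'n"
  proof -
    have "monom_mat (e i) A = (\<Prod>ij\<in>UNIV. if ij = (i,i) then A $ fst ij $ snd ij else 1)"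
      unfolding monom_mat_def e_def by (rule prod.cong) auto
    also have "\<dots> = A $ i $ i" by (subst prod.delta) auto
    finally show ?thesis .
  qed
  have d: "mdeg (e i) = 1" for i
  proof -
    have "mdeg (e i) = (\<Sum>ij\<in>UNIV. if ij = (i,i) then 1 else 0)" unfolding mdeg_def e_def by simp
    also have "\<dots> = 1" by (subst sum.delta) auto
    finally show ?thesis .
  qed
  have "polyf 1 (\<lambda>A. \<Sum>i\<in>UNIV. 1 * monom_mat (e i) A)"
    by (rule polyf_gen) (auto simp: d)
  then show ?thesis by (simp add: m trace_def)
qed

lemma polyf_lin: "polyf 1 (\<lambda>A::real^'n::finite^'n. a * trace A + b)"
  by (rule polyf_add[OF polyf_scale[OF polyf_trace] polyf_mono[OF polyf_const]]) auto

lemma polyf_prod: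
  assumes "\<And>j. j < i \<Longrightarrow> polyf 1 (f j)"
  shows "polyf i (\<lambda>A. \<Prod>j<i. f j A)"
  using assms
proof (induct i)
  case 0 then show ?case using polyf_const by simp
next
  case (Suc i)
  then have "polyf (i + 1) (\<lambda>A. (\<Prod>j<i. f j A) * f i A)" by (intro polyf_mult) auto
  then show ?case by simp
qed

lemma grass_sym: "grass k \<subseteq> symmat"
  unfolding grass_def symmat_def by auto

lemma grassK_sym: "grassK K \<subseteq> symmat"
  unfolding grassK_def using grass_sym by blast

lemma PolSym_iff: "p \<in> PolSym t \<longleftrightarrow> (\<exists>f. polyf t f \<and> p = (\<lambda>A. if A \<in> symmat then f A else 0))"
proof
  assume "p \<in> PolSym t"
  then obtain F c where F: "finite F" "\<forall>\<alpha>\<in>F. mdeg \<alpha> \<le> t"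
     "p = (\<lambda>A. if A \<in> symmat then (\<Sum>\<alpha>\<in>F. c \<alpha> * monom_mat \<alpha> A) else 0)"
    unfolding PolSym_def by blast
  then have "polyf t (\<lambda>A. \<Sum>\<alpha>\<in>F. c \<alpha> * monom_mat \<alpha> A)" unfolding polyf_def by blast
  then show "\<exists>f. polyf t f \<and> p = (\<lambda>A. if A \<in> symmat then f A else 0)" using F(3) by blast
next
  assume "\<exists>f. polyf t f \<and> p = (\<lambda>A. if A \<in> symmat then f A else 0)"
  then obtain F c where F: "finite F" "\<forall>\<alpha>\<in>F. mdeg \<alpha> \<le> t"
     "p = (\<lambda>A. if A \<in> symmat then (\<Sum>\<alpha>\<in>F. c \<alpha> * monom_mat \<alpha> A) else 0)"
    unfolding polyf_def by blast
  then show "p \<in> PolSym t" unfolding PolSym_def by blast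
qed

lemma PolOn_iff:
  assumes "M \<subseteq> symmat"
  shows "g \<in> PolOn t M \<longleftrightarrow> (\<exists>f. polyf t f \<and> g = (\<lambda>A. if A \<in> M then f A else 0))"
proof
  assume "g \<in> PolOn t M"
  then obtain p where p: "p \<in> PolSym t" "g = (\<lambda>A. if A \<in> M then p A else 0)"
    unfolding PolOn_def by blast
  then obtain f where f: "polyf t f" "p = (\<lambda>A. if A \<in> symmat then f A else 0)"
    using PolSym_iff by blast
  have "g = (\<lambda>A. if A \<in> M then f A else 0)" using p(2) f(2) assms by (auto simp: fun_eq_iff)
  then show "\<exists>f. polyf t f \<and> g = (\<lambda>A. if A \<in> M then f A else 0)" using f(1) by blast
next
  assume "\<exists>f. polyf t f \<and> g = (\<lambda>A. if A \<in> M then f A else 0)"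
  then obtain f where f: "polyf t f" "g = (\<lambda>A. if A \<in> M then f A else 0)" by blast
  define p where "p = (\<lambda>A. if A \<in> symmat then f A else 0)"
  have "p \<in> PolSym t" using f(1) PolSym_iff p_def by blast
  moreover have "g = (\<lambda>A. if A \<in> M then p A else 0)" using f(2) assms by (auto simp: fun_eq_iff p_def)
  ultimately show "g \<in> PolOn t M" unfolding PolOn_def by blast
qed

lemma finite_mdeg: "finite {\<alpha>::('n::finite\<times>'n \<Rightarrow> nat). mdeg \<alpha> \<le> t}"
proof -
  have "{\<alpha>::('n\<times>'n \<Rightarrow> nat). mdeg \<alpha> \<le> t} \<subseteq> PiE UNIV (\<lambda>_. {..t})"
  proof
    fix \<alpha> :: "'n\<times>'n \<Rightarrow> nat" assume "\<alpha> \<in> {\<alpha>. mdeg \<alpha> \<le> t}"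
    then have "\<alpha> x \<le> t" for x
      using member_le_sum[of x UNIV \<alpha>] unfolding mdeg_def by auto
    then show "\<alpha> \<in> PiE UNIV (\<lambda>_. {..t})" by (auto simp: PiE_UNIV_domain)
  qed
  moreover have "finite (PiE (UNIV::('n\<times>'n) set) (\<lambda>_. {..t}))" by (rule finite_PiE) auto
  ultimately show ?thesis by (rule finite_subset)
qed

lemma PolOn_span:
  fixes M :: "(real^'n::finite^'n) set" and t :: nat
  defines "W \<equiv> (\<lambda>\<alpha> A. if A \<in> M \<and> A \<in> symmat then monom_mat \<alpha> A else 0) ` {\<alpha>. mdeg \<alpha> \<le> t}"
  shows "PolOn t M \<subseteq> FV.span W" "finite W"
proof -
  show "finite W" unfolding W_def using finite_mdeg by blast
  show "PolOn t M \<subseteq> FV.span W"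
  proof
    fix g assume "g \<in> PolOn t M"
    then obtain p where p: "p \<in> PolSym t" "g = (\<lambda>A. if A \<in> M then p A else 0)"
      unfolding PolOn_def by blast
    then obtain F c where F: "finite F" "\<forall>\<alpha>\<in>F. mdeg \<alpha> \<le> t"
       "p = (\<lambda>A. if A \<in> symmat then (\<Sum>\<alpha>\<in>F. c \<alpha> * monom_mat \<alpha> A) else 0)"
      unfolding PolSym_def by blast
    have "g = (\<Sum>\<alpha>\<in>F. (\<lambda>x. c \<alpha> * (if x \<in> M \<and> x \<in> symmat then monom_mat \<alpha> x else 0)))"
      by (auto simp: fun_eq_iff sum_fun_apply p F(3))
    also have "\<dots> \<in> FV.span W"
    proof (rule FV.span_sum)
      fix \<alpha> assume "\<alpha> \<in> F"
      then have "(\<lambda>A. if A \<in> M \<and> A \<in> symmat then monom_mat \<alpha> A else 0) \<in> W"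
        unfolding W_def using F(2) by blast
      then show "(\<lambda>x. c \<alpha> * (if x \<in> M \<and> x \<in> symmat then monom_mat \<alpha> x else 0)) \<in> FV.span W"
        using FV.span_scale[OF FV.span_base] by blast
    qed
    finally show "g \<in> FV.span W" .
  qed
qed

theorem mainTheorem5:
  fixes ks :: "nat list" and t :: nat
  assumes "CARD('n::finite) \<ge> 2"
    and "ks \<noteq> []"
    and "distinct ks"
    and "set ks \<subseteq> {1..CARD('n) - 1}"
    and "\<forall>i j. i < j \<and> j < length ks \<longrightarrow>
           min (ks ! i) (CARD('n) - ks ! i) \<ge> min (ks ! j) (CARD('n) - ks ! j)"
  shows "fdim (PolOn t (grassK (set ks) :: (real^'n^'n) set))
         \<ge> (\<Sum>i < min (t + 1) (length ks). fdim (PolOn (t - i) (grass (ks ! i) :: (real^'n^'n) set)))"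
proof -
  define n where "n = min (t + 1) (length ks)"
  define G :: "nat \<Rightarrow> (real^'n^'n) set" where "G i = grass (ks ! i)" for i
  define MK :: "(real^'n^'n) set" where "MK = grassK (set ks)"
  have nlen: "i < n \<Longrightarrow> i < length ks" for i unfolding n_def by simp
  have nt: "i < n \<Longrightarrow> i \<le> t" for i unfolding n_def by simp
  have "\<forall>i. \<exists>B. finite B \<and> B \<subseteq> PolOn (t - i) (G i) \<and> FV.independent B \<and> card B = fdim (PolOn (t - i) (G i))"
    using basis_fin[OF PolOn_span(1) PolOn_span(2)] by blast
  then obtain B where B: "\<And>i. finite (B i)" "\<And>i. B i \<subseteq> PolOn (t - i) (G i)"
     "\<And>i. FV.independent (B i)" "\<And>i. card (B i) = fdim (PolOn (t - i) (G i))"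
    by metis
  define Q where "Q i b = (SOME q. polyf (t - i) q \<and> b = (\<lambda>A. if A \<in> G i then q A else 0))" for i b
  have Q: "polyf (t - i) (Q i b) \<and> b = (\<lambda>A. if A \<in> G i then Q i b A else 0)" if "b \<in> B i" for i b
  proof -
    have "\<exists>q. polyf (t - i) q \<and> b = (\<lambda>A. if A \<in> G i then q A else 0)"
      using B(2)[of i] that PolOn_iff[OF grass_sym[of "ks ! i"]] unfolding G_def by blast
    then show ?thesis unfolding Q_def by (rule someI_ex)
  qed
  define w where "w i A = (\<Prod>j<i. (trace A - real (ks ! j)) / (real (ks ! i) - real (ks ! j)))"
    for i and A :: "real^'n^'n"
  define L where "L i b = (\<lambda>A. if A \<in> MK then w i A * Q i b A else 0)" for i b
  have polyw: "polyf i (w i)" for i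
  proof -
    have fac: "polyf 1 (\<lambda>A::real^'n^'n. (trace A - real (ks ! j)) / (real (ks ! i) - real (ks ! j)))" for j
    proof -
      have "(\<lambda>A::real^'n^'n. (trace A - real (ks ! j)) / (real (ks ! i) - real (ks ! j))) =
        (\<lambda>A. (1 / (real (ks ! i) - real (ks ! j))) * trace A + (- real (ks ! j) / (real (ks ! i) - real (ks ! j))))"
        by (simp add: fun_eq_iff diff_divide_distrib)
      then show ?thesis using polyf_lin by metis
    qed
    have "polyf i (\<lambda>A. \<Prod>j<i. (\<lambda>j (A::real^'n^'n). (trace A - real (ks ! j)) / (real (ks ! i) - real (ks ! j))) j A)"
      by (rule polyf_prod) (use fac in simp)
    then show ?thesis unfolding w_def by (simp add: fun_eq_iff)
  qed
  have F1: "L i b \<in> PolOn t MK" if "i < n" "b \<in> B i" for i b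
  proof -
    have "polyf (i + (t - i)) (\<lambda>A. w i A * Q i b A)"
      using polyf_mult[OF polyw] Q[OF that(2)] by blast
    then have "polyf t (\<lambda>A. w i A * Q i b A)" using nt[OF that(1)] by simp
    then show ?thesis unfolding L_def using PolOn_iff[OF grassK_sym] MK_def by blast
  qed
  have F2: "L i b A = b A" if "i < n" "b \<in> B i" "A \<in> G i" for i b A
  proof -
    have "A \<in> MK" using that nlen unfolding MK_def grassK_def G_def by auto
    have tr: "trace A = real (ks ! i)" using that(3) unfolding G_def grass_def by auto
    have "w i A = (\<Prod>j<i. 1)" unfolding w_def
    proof (rule prod.cong[OF refl])
      fix j assume "j \<in> {..<i}"
      then have "ks ! j \<noteq> ks ! i" using assms(3) nlen[OF that(1)] nth_eq_iff_index_eq by fastforce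
      then show "(trace A - real (ks ! j)) / (real (ks ! i) - real (ks ! j)) = 1" using tr by simp
    qed
    then have "w i A = 1" by simp
    then show ?thesis using \<open>A \<in> MK\<close> Q[OF that(2)] that(3) unfolding L_def by (metis mult_1)
  qed
  have F3: "L i b A = 0" if "j < i" "A \<in> G j" for i j b A
  proof -
    have tr: "trace A = real (ks ! j)" using that(2) unfolding G_def grass_def by auto
    have "w i A = 0" unfolding w_def using that(1) tr by (subst prod_zero_iff) auto
    then show ?thesis unfolding L_def by simp
  qed
  have F5: "b A = 0" if "b \<in> B i" "A \<notin> G i" for i b A
    using Q[OF that(1)] that(2) by (metis (mono_tags, lifting))
  have inj: "inj_on (L i) (B i)" if "i < n" for i
  proof
    fix b b' assume bb: "b \<in> B i" "b' \<in> B i" "L i b = L i b'"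
    show "b = b'"
    proof
      fix A show "b A = b' A"
        using F2[OF that bb(1)] F2[OF that bb(2)] F5[OF bb(1)] F5[OF bb(2)] bb(3) by metis
    qed
  qed
  have nz: "\<exists>A\<in>G i. b A \<noteq> 0" if "b \<in> B i" for i b
  proof -
    have "b \<noteq> 0" using B(3)[of i] that FV.dependent_zero by blast
    then obtain A where "b A \<noteq> 0" by (auto simp: fun_eq_iff)
    then show ?thesis using F5[OF that] by blast
  qed
  have disj: "L i ` B i \<inter> L j ` B j = {}" if "j < i" "i < n" for i j
  proof (rule ccontr)
    assume "L i ` B i \<inter> L j ` B j \<noteq> {}"
    then obtain b b' where bb: "b \<in> B i" "b' \<in> B j" "L i b = L j b'" by blast
    obtain A where A: "A \<in> G j" "b' A \<noteq> 0" using nz[OF bb(2)] by blast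
    have "L j b' A = b' A" using F2[OF _ bb(2) A(1)] that by simp
    moreover have "L i b A = 0" using F3[OF that(1) A(1)] .
    ultimately show False using bb(3) A(2) by simp
  qed
  define S where "S = (\<Union>i<n. L i ` B i)"
  have SP: "S \<subseteq> PolOn t MK" unfolding S_def using F1 by blast
  have cardS: "card S = (\<Sum>i<n. card (B i))"
  proof -
    have "card S = (\<Sum>i<n. card (L i ` B i))" unfolding S_def
    proof (rule card_UN_disjoint)
      show "finite {..<n}" by simp
      show "\<forall>i\<in>{..<n}. finite (L i ` B i)" using B(1) by blast
      show "\<forall>i\<in>{..<n}. \<forall>j\<in>{..<n}. i \<noteq> j \<longrightarrow> L i ` B i \<inter> L j ` B j = {}"
        using disj by (metis Int_commute lessThan_iff linorder_neqE_nat)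
    qed
    also have "\<dots> = (\<Sum>i<n. card (B i))"
      by (rule sum.cong[OF refl]) (simp add: card_image inj)
    finally show ?thesis .
  qed
  have indS: "FV.independent S"
    unfolding FV.independent_explicit_module
  proof (intro allI impI)
    fix T u v
    assume T: "finite T" "T \<subseteq> S" "(\<Sum>v\<in>T. (\<lambda>x. u v * v x)) = 0" "v \<in> T"
    have zero: "(\<Sum>v\<in>T. u v * v A) = 0" for A
      using fun_cong[OF T(3), of A] by (simp add: sum_fun_apply)
    have key: "i < n \<Longrightarrow> \<forall>v\<in>T \<inter> L i ` B i. u v = 0" for i
    proof (induction i rule: less_induct)
      case (less i)
      define B' where "B' = {b\<in>B i. L i b \<in> T}"
      have fB': "finite B'" "B' \<subseteq> B i" using B(1)[of i] unfolding B'_def by auto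
      have injB': "inj_on (L i) B'" using inj[OF less.prems] fB'(2) inj_on_subset by blast
      have eq0: "(\<Sum>b\<in>B'. u (L i b) * b A) = 0" for A
      proof (cases "A \<in> G i")
        case True
        have "0 = (\<Sum>v\<in>T. u v * v A)" using zero by simp
        also have "\<dots> = (\<Sum>v\<in>T \<inter> L i ` B i. u v * v A)"
        proof (rule sum.mono_neutral_right[OF T(1)])
          show "T \<inter> L i ` B i \<subseteq> T" by blast
          show "\<forall>v\<in>T - T \<inter> L i ` B i. u v * v A = 0"
          proof
            fix v assume v: "v \<in> T - T \<inter> L i ` B i"
            then obtain j b where jb: "j < n" "b \<in> B j" "v = L j b" using T(2) unfolding S_def by blast
            have "j \<noteq> i" using v jb by blast
            then show "u v * v A = 0"
            proof (cases "j < i")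
              case True
              have "v \<in> T \<inter> L j ` B j" using v jb by blast
              then show ?thesis using less.IH[OF True jb(1)] by simp
            next
              case False
              then have "i < j" using \<open>j \<noteq> i\<close> by simp
              then show ?thesis using F3[OF _ \<open>A \<in> G i\<close>] jb(3) by simp
            qed
          qed
        qed
        also have "T \<inter> L i ` B i = L i ` B'" unfolding B'_def by blast
        also have "(\<Sum>v\<in>L i ` B'. u v * v A) = (\<Sum>b\<in>B'. u (L i b) * L i b A)"
          by (simp add: sum.reindex[OF injB'])
        also have "\<dots> = (\<Sum>b\<in>B'. u (L i b) * b A)"
          by (rule sum.cong[OF refl]) (use F2[OF less.prems _ True] fB'(2) in auto)
        finally show ?thesis by simp
      next
        case False
        have "\<forall>b\<in>B'. u (L i b) * b A = 0" using F5[OF _ False] fB'(2) by auto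
        then show ?thesis by (intro sum.neutral) blast
      qed
      then have "(\<Sum>b\<in>B'. (\<lambda>x. u (L i b) * b x)) = 0"
        by (simp add: fun_eq_iff sum_fun_apply)
      moreover have ie: "\<And>T u v. finite T \<Longrightarrow> T \<subseteq> B i \<Longrightarrow> (\<Sum>v\<in>T. (\<lambda>x. u v * v x)) = 0 \<Longrightarrow> v \<in> T \<Longrightarrow> u v = 0"
        using B(3)[of i] unfolding FV.independent_explicit_module by blast
      ultimately have "\<forall>b\<in>B'. u (L i b) = 0"
        using ie[OF fB'(1) fB'(2), of "\<lambda>b. u (L i b)"] by blast
      then show ?case unfolding B'_def by blast
    qed
    obtain i where "i < n" "v \<in> L i ` B i" using T(2,4) unfolding S_def by blast
    then show "u v = 0" using key T(4) by blast
  qed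
  have "finite S \<and> card S \<le> fdim (PolOn t MK)"
    by (rule card_le_fdim[OF PolOn_span(1) PolOn_span(2) SP indS])
  then have "(\<Sum>i<n. card (B i)) \<le> fdim (PolOn t MK)" using cardS by simp
  then show ?thesis using B(4) unfolding n_def MK_def G_def by simp
qed

end
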